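(* Assume the setting and standing assumptions described in the context. Let $0<\tau_i\le\tau_{i+1}$ and let $\underline{M}_{\tau_i},\underline{M}_{\tau_{i+1}}\subset\mathbb{R}^n$ be inner-approximations of the isochronous manifolds $M_{\tau_i}$ and $M_{\tau_{i+1}}$ respectively. Assume that each of $\underline{M}_{\tau_i}$ and $\underline{M}_{\tau_{i+1}}$ has the ray property (for every $x\in\mathbb{R}^n\setminus\{0\}$ there exists a unique $\lambda_x>0$ with $\lambda_x x$ in the set), and that the pair has the encirclement property (for every $x\in\underline{M}_{\tau_i}$ there exists a unique $\lambda_x\in(0,1)$ with $\lambda_x x\in\underline{M}_{\tau_{i+1}}$, and there is no $\kappa_x\ge1$ with $\kappa_x x\in\underline{M}_{\tau_{i+1}}$). Define $$\mathcal{R}_i=\{x\in\mathbb{R}^n:\ \exists\kappa_x\ge1\text{ with }\kappa_x x\in\underline{M}_{\tau_i}\ \text{and}\ \exists\lambda_x\in(0,1)\text{ with }\lambda_x x\in\underline{M}_{\tau_{i+1}}\}.$$ Then $\tau_i\le\tau(x)$ for all $x\in\mathcal{R}_i$.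
   Context: Let $f:\mathbb{R}^n\times\mathbb{R}^m\to\mathbb{R}^n$ and a feedback law $\upsilon:\mathbb{R}^n\to\mathbb{R}^m$ be given. Define $F:\mathbb{R}^{2n}\to\mathbb{R}^{2n}$ by $F(z,e)=\big(f(z,\upsilon(z+e)),\,-f(z,\upsilon(z+e))\big)$. For $x\in\mathbb{R}^n$, $\xi(t;x)$ denotes the solution of $\dot\xi=F(\xi)$ with $\xi(0;x)=(x,0)$. A triggering function $\phi:\mathbb{R}^{2n}\to\mathbb{R}$ is given, and $\tau(x)=\inf\{t>0:\phi(\xi(t;x))=0\}$. The isochronous manifold of time $\tau_\star>0$ is $M_{\tau_\star}=\{x:\tau(x)=\tau_\star\}$. A set $\underline{M}_{\tau_\star}\subset\mathbb{R}^n$ is an inner-approximation of $M_{\tau_\star}$ if for every $x\in\underline{M}_{\tau_\star}$ there exists $\kappa_x\ge1$ with $\kappa_x x\in M_{\tau_\star}$ and there is no $\lambda_x\in(0,1)$ with $\lambda_x x\in M_{\tau_\star}$. Standing assumptions: (i) $F$ is smooth and homogeneous of degree $\alpha\ge1$ with all weights $1$, i.e. $F(\lambda\xi)=\lambda^{\alpha+1}F(\xi)$ for all $\lambda>0$; (ii) $\phi$ is smooth and homogeneous of degree $\theta\ge1$ with weights $1$, i.e. $\phi(\lambda\xi)=\lambda^{\theta+1}\phi(\xi)$ for all $\lambda>0$; (iii) for every $x\neq0$, $\phi((x,0))<0$ and there exists $t_x\in(0,\infty)$ with $\phi(\xi(t_x;x))=0$; (iv) compact sets $\mathrm{Z}\subset\mathbb{R}^n$,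 $\Xi\subset\mathbb{R}^{2n}$ containing a neighbourhood of the origin are given such that for all $x\in\mathrm{Z}$, $t\ge0$: $\phi(\xi(t;x))\le0\Rightarrow\xi(t;x)\in\Xi$; (v) the origin is the only equilibrium of $\dot\zeta=f(\zeta,\upsilon(\zeta))$. *)

theory Defs
  imports "HOL-Analysis.Analysis"
begin

fun Ck :: "nat \<Rightarrow> ('a::real_normed_vector \<Rightarrow> 'b::real_normed_vector) \<Rightarrow> bool" where
  "Ck 0 g = continuous_on UNIV g"
| "Ck (Suc k) g = ((\<forall>x. g differentiable (at x)) \<and>
      (\<forall>v. Ck k (\<lambda>x. frechet_derivative g (at x) v)))"

definition smooth_map :: "('a::real_normed_vector \<Rightarrow> 'b::real_normed_vector) \<Rightarrow> bool" where
  "smooth_map g \<longleftrightarrow> (\<forall>k. Ck k g)"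

text \<open>The closed-loop/error vector field F(z,e) = (f(z,v(z+e)), -f(z,v(z+e))).\<close>
definition closed_loop_F ::
  "('a::euclidean_space \<Rightarrow> 'b::euclidean_space \<Rightarrow> 'a) \<Rightarrow> ('a \<Rightarrow> 'b) \<Rightarrow> 'a \<times> 'a \<Rightarrow> 'a \<times> 'a" where
  "closed_loop_F f u w = (f (fst w) (u (fst w + snd w)), - f (fst w) (u (fst w + snd w)))"

definition trig_time :: "('a \<times> 'a \<Rightarrow> real) \<Rightarrow> ('a \<Rightarrow> real \<Rightarrow> 'a \<times> 'a) \<Rightarrow> 'a \<Rightarrow> real" where
  "trig_time \<phi> \<xi> x = Inf {t. 0 < t \<and> \<phi> (\<xi> x t) = 0}"

definition isochronous :: "('a \<times> 'a \<Rightarrow> real) \<Rightarrow> ('a \<Rightarrow> real \<Rightarrow> 'a \<times> 'a) \<Rightarrow> real \<Rightarrow> 'a set" where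
  "isochronous \<phi> \<xi> ts = {x. trig_time \<phi> \<xi> x = ts}"

definition inner_approx :: "'a::real_vector set \<Rightarrow> 'a set \<Rightarrow> bool" where
  "inner_approx S M \<longleftrightarrow> (\<forall>x\<in>S. (\<exists>kap\<ge>1. kap *\<^sub>R x \<in> M) \<and> \<not> (\<exists>lam\<in>{0<..<1}. lam *\<^sub>R x \<in> M))"

definition ray_property :: "'a::real_vector set \<Rightarrow> bool" where
  "ray_property S \<longleftrightarrow> (\<forall>x. x \<noteq> 0 \<longrightarrow> (\<exists>!lam. 0 < lam \<and> lam *\<^sub>R x \<in> S))"

definition encirclement :: "'a::real_vector set \<Rightarrow> 'a set \<Rightarrow> bool" where
  "encirclement S1 S2 \<longleftrightarrow> (\<forall>x\<in>S1. (\<exists>!lam. lam \<in> {0<..<1} \<and> lam *\<^sub>R x \<in> S2)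
      \<and> \<not> (\<exists>kap\<ge>1. kap *\<^sub>R x \<in> S2))"

definition region_between :: "'a::real_vector set \<Rightarrow> 'a set \<Rightarrow> 'a set" where
  "region_between S1 S2 = {x. (\<exists>kap\<ge>1. kap *\<^sub>R x \<in> S1) \<and> (\<exists>lam\<in>{0<..<1}. lam *\<^sub>R x \<in> S2)}"

end

theory Submission
  imports Defs
begin

lemma uniq_aux:
  fixes F :: "'c::euclidean_space \<Rightarrow> 'c" and z1 z2 :: "real \<Rightarrow> 'c"
  assumes lip: "L-lipschitz_on K F" and T: "0 \<le> T"
    and d1: "\<And>t. 0 \<le> t \<Longrightarrow> t \<le> T \<Longrightarrow> (z1 has_vector_derivative F (z1 t)) (at t within {0..})"
    and d2: "\<And>t. 0 \<le> t \<Longrightarrow> t \<le> T \<Longrightarrow> (z2 has_vector_derivative F (z2 t)) (at t within {0..})"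
    and K1: "\<And>t. 0 \<le> t \<Longrightarrow> t \<le> T \<Longrightarrow> z1 t \<in> K"
    and K2: "\<And>t. 0 \<le> t \<Longrightarrow> t \<le> T \<Longrightarrow> z2 t \<in> K"
    and init: "z1 0 = z2 0"
  shows "z1 T = z2 T"
proof -
  define h where "h t = exp (-2*L*t) * ((z1 t - z2 t) \<bullet> (z1 t - z2 t))" for t
  have L0: "L \<ge> 0" using lip lipschitz_on_nonneg by blast
  have c1: "continuous_on {0..T} z1"
    unfolding continuous_on_eq_continuous_within
  proof
    fix t assume "t \<in> {0..T}"
    hence "continuous (at t within {0..}) z1" using d1[of t] has_vector_derivative_continuous by auto
    thus "continuous (at t within {0..T}) z1" by (rule continuous_within_subset) auto
  qed
  have c2: "continuous_on {0..T} z2"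
    unfolding continuous_on_eq_continuous_within
  proof
    fix t assume "t \<in> {0..T}"
    hence "continuous (at t within {0..}) z2" using d2[of t] has_vector_derivative_continuous by auto
    thus "continuous (at t within {0..T}) z2" by (rule continuous_within_subset) auto
  qed
  have ch: "continuous_on {0..T} h"
    unfolding h_def by (intro continuous_intros c1 c2)
  have "h 0 \<ge> h T"
  proof (rule DERIV_nonpos_imp_decreasing_open[OF T _ ch])
    fix t assume t: "0 < t" "t < T"
    have "(z1 has_vector_derivative F (z1 t)) (at t within {0<..})"
      by (rule has_vector_derivative_within_subset[OF d1[of t]]) (use t in auto)
    hence a1: "(z1 has_vector_derivative F (z1 t)) (at t)"
      by (subst (asm) has_vector_derivative_within_open) (use t in auto)
    have "(z2 has_vector_derivative F (z2 t)) (at t within {0<..})"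
      by (rule has_vector_derivative_within_subset[OF d2[of t]]) (use t in auto)
    hence a2: "(z2 has_vector_derivative F (z2 t)) (at t)"
      by (subst (asm) has_vector_derivative_within_open) (use t in auto)
    define d where "d = z1 t - z2 t"
    define e where "e = F (z1 t) - F (z2 t)"
    have ad: "((\<lambda>s. z1 s - z2 s) has_vector_derivative e) (at t)"
      unfolding e_def by (intro derivative_intros a1 a2)
    have ip: "((\<lambda>s. (z1 s - z2 s) \<bullet> (z1 s - z2 s)) has_real_derivative (d \<bullet> e + e \<bullet> d)) (at t)"
      unfolding has_field_derivative_def
      by (rule has_derivative_eq_rhs[OF has_derivative_inner[OF ad[unfolded has_vector_derivative_def] ad[unfolded has_vector_derivative_def]]])
        (auto simp: fun_eq_iff d_def inner_commute algebra_simps)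
    have ex: "((\<lambda>r. exp (- 2 * L * r)) has_real_derivative (exp (- 2 * L * t) * (- 2 * L))) (at t)"
      by (auto intro!: derivative_eq_intros)
    have D: "(h has_real_derivative (exp (-2*L*t) * (-2*L) * (d \<bullet> d) + exp (-2*L*t) * (d \<bullet> e + e \<bullet> d))) (at t)"
      unfolding h_def by (rule DERIV_cong[OF DERIV_mult[OF ex ip]]) (simp add: d_def algebra_simps)
    have "norm e \<le> L * norm d"
      unfolding e_def d_def using lipschitz_on_normD[OF lip K1[of t] K2[of t]] t by auto
    hence "d \<bullet> e \<le> L * (d \<bullet> d)"
      using norm_cauchy_schwarz[of d e] L0
      by (smt (verit, ccfv_SIG) mult_left_mono norm_ge_zero power2_eq_square power2_norm_eq_inner mult.commute mult.assoc)
    hence "(-2*L) * (d \<bullet> d) + (d \<bullet> e + e \<bullet> d) \<le> 0" by (simp add: inner_commute)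
    hence "exp (-2*L*t) * ((-2*L) * (d \<bullet> d) + (d \<bullet> e + e \<bullet> d)) \<le> 0"
      by (simp add: mult_nonneg_nonpos)
    thus "\<exists>y. (h has_real_derivative y) (at t) \<and> y \<le> 0"
      using D by (intro exI[of _ "exp (-2*L*t) * (-2*L) * (d \<bullet> d) + exp (-2*L*t) * (d \<bullet> e + e \<bullet> d)"])
        (simp add: algebra_simps)
  qed
  moreover have "h 0 = 0" using init by (simp add: h_def)
  ultimately have "(z1 T - z2 T) \<bullet> (z1 T - z2 T) \<le> 0"
    unfolding h_def by (simp add: mult_le_0_iff)
  hence "(z1 T - z2 T) \<bullet> (z1 T - z2 T) = 0" by (meson inner_ge_zero order_antisym)
  thus ?thesis by simp
qed
lemma smooth_loclip:
  fixes F :: "'c::euclidean_space \<Rightarrow> 'c"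
  assumes "smooth_map F"
  shows "local_lipschitz (UNIV::real set) UNIV (\<lambda>_. F)"
proof -
  have C: "Ck (Suc 0) F" using assms unfolding smooth_map_def by blast
  hence dif: "\<And>x. F differentiable (at x)"
    and cont: "\<And>v. continuous_on UNIV (\<lambda>x. frechet_derivative F (at x) v)" by auto
  define f' where "f' p = Blinfun (frechet_derivative F (at (snd p)))" for p :: "real \<times> 'c"
  have hd: "\<And>x. (F has_derivative frechet_derivative F (at x)) (at x)"
    using dif frechet_derivative_works by blast
  have bl: "\<And>x. bounded_linear (frechet_derivative F (at x))"
    using hd has_derivative_bounded_linear by blast
  have ap: "\<And>p. blinfun_apply (f' p) = frechet_derivative F (at (snd p))"
    unfolding f'_def using bl bounded_linear_Blinfun_apply by blast
  show ?thesis
  proof (rule c1_implies_local_lipschitz[where f' = f'])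
    fix t x show "((\<lambda>_. F) t has_derivative blinfun_apply (f' (t, x))) (at x)"
      using hd ap by simp
  next
    have "isCont f' p" for p :: "real \<times> 'c"
    proof (rule continuous_blinfun_componentwiseI1)
      fix i :: 'c
      have "isCont (\<lambda>x. frechet_derivative F (at x) i) (snd p)"
        using cont[of i] by (simp add: continuous_on_eq_continuous_at)
      hence "isCont ((\<lambda>x. frechet_derivative F (at x) i) \<circ> snd) p"
        by (intro continuous_at_compose continuous_intros)
      thus "isCont (\<lambda>x. blinfun_apply (f' x) i) p" by (simp add: ap o_def)
    qed
    thus "continuous_on (UNIV \<times> UNIV) f'"
      by (intro continuous_at_imp_continuous_on) auto
  qed auto
qed

lemma sol_cont:
  assumes "\<And>t. 0 \<le> t \<Longrightarrow> (z has_vector_derivative F (z t)) (at t within {0..})"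
  shows "continuous_on {0..T} z"
  unfolding continuous_on_eq_continuous_within
proof
  fix t assume "t \<in> {0..T}"
  hence "continuous (at t within {0..}) z" using assms[of t] has_vector_derivative_continuous by auto
  thus "continuous (at t within {0..T}) z" by (rule continuous_within_subset) auto
qed

lemma ode_unique:
  fixes F :: "'c::euclidean_space \<Rightarrow> 'c" and z1 z2 :: "real \<Rightarrow> 'c"
  assumes sm: "smooth_map F"
    and d1: "\<And>t. 0 \<le> t \<Longrightarrow> (z1 has_vector_derivative F (z1 t)) (at t within {0..})"
    and d2: "\<And>t. 0 \<le> t \<Longrightarrow> (z2 has_vector_derivative F (z2 t)) (at t within {0..})"
    and init: "z1 0 = z2 0" and T: "0 \<le> T"
  shows "z1 T = z2 T"
proof -
  define K where "K = z1 ` {0..T} \<union> z2 ` {0..T}"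
  have "compact K" unfolding K_def
    using sol_cont[OF d1] sol_cont[OF d2] compact_continuous_image compact_Un compact_Icc by metis
  have ll: "local_lipschitz {0::real} K (\<lambda>_. F)"
    using local_lipschitz_subset[OF smooth_loclip[OF sm]] by blast
  obtain L where "\<And>t. t \<in> {0::real} \<Longrightarrow> L-lipschitz_on K ((\<lambda>_. F) t)"
    using local_lipschitz_compact_implies_lipschitz[OF ll \<open>compact K\<close>] by auto
  hence lip: "L-lipschitz_on K F" by simp
  show ?thesis
    by (rule uniq_aux[OF lip T]) (use d1 d2 init in \<open>auto simp: K_def\<close>)
qed


theorem corollary1:
  fixes f :: "'a::euclidean_space \<Rightarrow> 'b::euclidean_space \<Rightarrow> 'a"
    and u :: "'a \<Rightarrow> 'b"
    and \<phi> :: "'a \<times> 'a \<Rightarrow> real"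
    and \<xi> :: "'a \<Rightarrow> real \<Rightarrow> 'a \<times> 'a"
    and \<alpha> \<theta> \<tau>i \<tau>i1 :: real
    and Z :: "'a set" and \<Xi> :: "('a \<times> 'a) set"
    and Mi Mi1 :: "'a set"
  assumes sol_init: "\<And>x. \<xi> x 0 = (x, 0)"
    and sol_ode: "\<And>x t. t \<ge> 0 \<Longrightarrow>
        (\<xi> x has_vector_derivative closed_loop_F f u (\<xi> x t)) (at t within {0..})"
    and F_smooth: "smooth_map (closed_loop_F f u)"
    and \<alpha>_ge: "\<alpha> \<ge> 1"
    and F_hom: "\<And>l w. l > 0 \<Longrightarrow>
        closed_loop_F f u (l *\<^sub>R w) = (l powr (\<alpha> + 1)) *\<^sub>R closed_loop_F f u w"
    and \<phi>_smooth: "smooth_map \<phi>"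
    and \<theta>_ge: "\<theta> \<ge> 1"
    and \<phi>_hom: "\<And>l w. l > 0 \<Longrightarrow> \<phi> (l *\<^sub>R w) = l powr (\<theta> + 1) * \<phi> w"
    and \<phi>_neg: "\<And>x. x \<noteq> 0 \<Longrightarrow> \<phi> (x, 0) < 0"
    and \<phi>_hit: "\<And>x. x \<noteq> 0 \<Longrightarrow> \<exists>t>0. \<phi> (\<xi> x t) = 0"
    and Z_cpt: "compact Z" and Z_nbhd: "\<exists>e>0. ball 0 e \<subseteq> Z"
    and \<Xi>_cpt: "compact \<Xi>" and \<Xi>_nbhd: "\<exists>e>0. ball 0 e \<subseteq> \<Xi>"
    and Z_\<Xi>: "\<And>x t. x \<in> Z \<Longrightarrow> t \<ge> 0 \<Longrightarrow> \<phi> (\<xi> x t) \<le> 0 \<Longrightarrow> \<xi> x t \<in> \<Xi>"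
    and equil: "\<And>z. f z (u z) = 0 \<Longrightarrow> z = 0"
    and \<tau>_pos: "0 < \<tau>i" and \<tau>_le: "\<tau>i \<le> \<tau>i1"
    and inner_i: "inner_approx Mi (isochronous \<phi> \<xi> \<tau>i)"
    and inner_i1: "inner_approx Mi1 (isochronous \<phi> \<xi> \<tau>i1)"
    and ray_i: "ray_property Mi" and ray_i1: "ray_property Mi1"
    and encirc: "encirclement Mi Mi1"
  shows "\<forall>x \<in> region_between Mi Mi1. \<tau>i \<le> trig_time \<phi> \<xi> x"
proof
  let ?F = "closed_loop_F f u"
  fix x assume xr: "x \<in> region_between Mi Mi1"
  then obtain kap where kap: "kap \<ge> 1" "kap *\<^sub>R x \<in> Mi" unfolding region_between_def by auto
  then obtain k where k: "k \<ge> 1" "k *\<^sub>R (kap *\<^sub>R x) \<in> isochronous \<phi> \<xi> \<tau>i"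
    using inner_i unfolding inner_approx_def by blast
  define c where "c = k * kap"
  define y where "y = c *\<^sub>R x"
  have c1: "c \<ge> 1" unfolding c_def using k kap by (metis mult_mono' mult_1 zero_le_one order_trans)
  have ty: "trig_time \<phi> \<xi> y = \<tau>i" using k unfolding y_def c_def isochronous_def by simp
  show "\<tau>i \<le> trig_time \<phi> \<xi> x"
  proof (cases "x = 0")
    case True
    then show ?thesis using ty unfolding y_def by simp
  next
    case False
    define \<mu> where "\<mu> = 1 / c"
    have \<mu>: "0 < \<mu>" "\<mu> \<le> 1" unfolding \<mu>_def using c1 by auto
    have xy: "x = \<mu> *\<^sub>R y" unfolding y_def \<mu>_def using c1 by simp
    define p where "p = \<mu> powr \<alpha>"
    have p: "0 < p" "p \<le> 1" unfolding p_def using \<mu> \<alpha>_ge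
      by (auto intro: powr_le1)
    have scal: "\<xi> x t = \<mu> *\<^sub>R \<xi> y (p * t)" if t: "t \<ge> 0" for t
    proof (rule ode_unique[OF F_smooth sol_ode _ _ t])
      show "\<xi> x 0 = \<mu> *\<^sub>R \<xi> y (p * 0)" using sol_init xy by simp
    next
      fix s :: real assume s: "0 \<le> s"
      have d1: "((\<lambda>t. p * t) has_vector_derivative p) (at s within {0..})"
        using has_real_derivative_iff_has_vector_derivative[THEN iffD1, OF DERIV_cmult_Id[of p]]
        by (rule has_vector_derivative_at_within)
      have d2: "(\<xi> y has_vector_derivative ?F (\<xi> y (p * s))) (at (p * s) within (\<lambda>t. p * t) ` {0..})"
        by (rule has_vector_derivative_within_subset[OF sol_ode]) (use s p in auto)
      have d3: "((\<lambda>t. \<xi> y (p * t)) has_vector_derivative p *\<^sub>R ?F (\<xi> y (p * s))) (at s within {0..})"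
        using vector_diff_chain_within[OF d1 d2] by (simp add: o_def)
      have d4: "((\<lambda>t. \<mu> *\<^sub>R \<xi> y (p * t)) has_vector_derivative \<mu> *\<^sub>R (p *\<^sub>R ?F (\<xi> y (p * s)))) (at s within {0..})"
        by (rule bounded_linear.has_vector_derivative[OF bounded_linear_scaleR_right d3])
      have "\<mu> *\<^sub>R (p *\<^sub>R ?F (\<xi> y (p * s))) = ?F (\<mu> *\<^sub>R \<xi> y (p * s))"
        using F_hom[OF \<mu>(1)] \<mu>(1) unfolding p_def by (simp add: powr_add)
      with d4 show "((\<lambda>t. \<mu> *\<^sub>R \<xi> y (p * t)) has_vector_derivative ?F (\<mu> *\<^sub>R \<xi> y (p * s))) (at s within {0..})"
        by simp
    qed
    have ne: "{t. 0 < t \<and> \<phi> (\<xi> x t) = 0} \<noteq> {}" using \<phi>_hit[OF False] by auto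
    show ?thesis unfolding trig_time_def
    proof (rule cInf_greatest[OF ne])
      fix t assume "t \<in> {t. 0 < t \<and> \<phi> (\<xi> x t) = 0}"
      hence t: "0 < t" "\<phi> (\<xi> x t) = 0" by auto
      have "\<phi> (\<xi> x t) = \<mu> powr (\<theta> + 1) * \<phi> (\<xi> y (p * t))"
        using scal[of t] t \<phi>_hom[OF \<mu>(1)] by simp
      hence z: "\<phi> (\<xi> y (p * t)) = 0" using t \<mu> by simp
      have "trig_time \<phi> \<xi> y \<le> p * t" unfolding trig_time_def
        by (rule cInf_lower) (use z t p in \<open>auto intro!: bdd_belowI[of _ 0]\<close>)
      also have "\<dots> \<le> t" using p t by (simp add: mult_le_cancel_right1)
      finally show "\<tau>i \<le> t" using ty by simp
    qed
  qed
qed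

end
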